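(* Assume Assumptions A, B, C and D hold (with constants $L_\phi,G,V,H>0$), and let $w^{(t)}$, $0\le t\le T$, be generated by Algorithm 2, where $T=\beta/\varepsilon$ for a constant $\beta>0$ (assumed to be an integer). Let $\eta^{(t)}=D\sqrt{\varepsilon}$ for some $D>0$, and $\alpha_i^{(t)}=(1+\varepsilon)^t\alpha_i^{(0)}$ with $\alpha_i^{(0)}=\frac{\alpha}{e^{\beta}L_\phi}$ for some $\alpha\in(0,\tfrac14)$. Then $$\frac1T\sum_{t=0}^{T-1}[F(w^{(t)})-F_*]\le\frac{e^{\beta}L_\phi(1+\varepsilon)}{2(1-4\alpha)\alpha\beta}\cdot\frac1n\sum_{i=1}^n\|h(w^{(0)};i)-h_i^*\|^2\cdot\varepsilon+\frac{e^{\beta}L_\phi(4\varepsilon+3)}{2\alpha(1-4\alpha)}\Big[D^2H^2+c\big(2+(V+\varepsilon^2+2)GD^2\big)^2+2+V\Big]\cdot\varepsilon.$$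
   Context: Let $n,c,d$ be positive integers and $[n]=\{1,\dots,n\}$. For each $i\in[n]$ let $h(\cdot;i):\mathbb{R}^d\to\mathbb{R}^c$ (components $h_j(\cdot;i)$, $j\in[c]$) and $\phi_i:\mathbb{R}^c\to\mathbb{R}$. Put $f(w;i)=\phi_i(h(w;i))$, $F(w)=\frac1n\sum_{i=1}^n f(w;i)$ and $F_*=\inf_{w\in\mathbb{R}^d}F(w)$. Each $\phi_i$ is assumed to attain its minimum, and $h_i^*\in\arg\min_{z}\phi_i(z)$. Vector norms are Euclidean; matrix norms are operator (spectral) norms. Assumption A: each $\phi_i$ is convex, bounded below, and $L_\phi$-smooth, i.e. $\|\nabla\phi_i(z_1)-\nabla\phi_i(z_2)\|\le L_\phi\|z_1-z_2\|$ for all $z_1,z_2$. Assumption B: each $h(\cdot;i)$ is twice continuously differentiable and there is $G>0$ with $\|\nabla_w^2 h_j(w;i)\|\le G$ for all $w\in\mathbb{R}^d$, $i\in[n]$, $j\in[c]$. Iteration setup: given a tolerance $\varepsilon>0$, step sizes $\eta^{(t)}>0$, learning rates $\alpha_i^{(t)}>0$ and iterates $w^{(t)}$, let $H_i^{(t)}\in\mathbb{R}^{c\times d}$ be the Jacobian of $h(\cdot;i)$ at $w^{(t)}$, let $\Phi^{(t)}(v)=\frac{1}{2n}\sum_{i=1}^n\|\eta^{(t)}H_i^{(t)}v-\alpha_i^{(t)}\nabla\phi_i(h(w^{(t)};i))\|^2$, $\Psi^{(t)}(v)=\Phi^{(t)}(v)+\frac{\varepsilon^2}{2}\|v\|^2$,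 and let $v_{*\mathrm{reg}}^{(t)}$ be the unique minimizer of $\Psi^{(t)}$ over $\mathbb{R}^d$. Algorithm 2: choose $w^{(0)}\in\mathbb{R}^d$; for $t=0,\dots,T-1$ let $v^{(t)}$ be any vector with $\|v^{(t)}-v_{*\mathrm{reg}}^{(t)}\|\le\varepsilon$ and set $w^{(t+1)}=w^{(t)}-\eta^{(t)}v^{(t)}$. Assumption C (constant $V>0$): for each $0\le t<T$ there exists $\hat v^{(t)}\in\mathbb{R}^d$ with $\|\hat v^{(t)}\|^2\le V$ and $\Phi^{(t)}(\hat v^{(t)})\le\varepsilon^2$. Assumption D (constant $H>0$): $\|H_i^{(t)}\|\le H/\sqrt{\varepsilon}$ for all $i\in[n]$ and $0\le t<T$. *)

theory Defs
  imports "HOL-Analysis.Analysis"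
begin

definition Fobj :: "nat \<Rightarrow> (nat \<Rightarrow> real^'c \<Rightarrow> real) \<Rightarrow> (nat \<Rightarrow> real^'d \<Rightarrow> real^'c) \<Rightarrow> real^'d \<Rightarrow> real"
  where "Fobj n phi h w = (\<Sum>i=1..n. phi i (h i w)) / real n"

definition PhiQ :: "nat \<Rightarrow> (nat \<Rightarrow> real^'d \<Rightarrow> real^'d^'c) \<Rightarrow> (nat \<Rightarrow> real^'c \<Rightarrow> real^'c)
    \<Rightarrow> (nat \<Rightarrow> real^'d \<Rightarrow> real^'c) \<Rightarrow> real \<Rightarrow> (nat \<Rightarrow> real) \<Rightarrow> real^'d \<Rightarrow> real^'d \<Rightarrow> real"
  where "PhiQ n J gphi h eta alpha w v =
     (\<Sum>i=1..n. (norm (eta *\<^sub>R (J i w *v v) - alpha i *\<^sub>R gphi i (h i w)))\<^sup>2) / (2 * real n)"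

definition PsiQ :: "nat \<Rightarrow> (nat \<Rightarrow> real^'d \<Rightarrow> real^'d^'c) \<Rightarrow> (nat \<Rightarrow> real^'c \<Rightarrow> real^'c)
    \<Rightarrow> (nat \<Rightarrow> real^'d \<Rightarrow> real^'c) \<Rightarrow> real \<Rightarrow> (nat \<Rightarrow> real) \<Rightarrow> real \<Rightarrow> real^'d \<Rightarrow> real^'d \<Rightarrow> real"
  where "PsiQ n J gphi h eta alpha eps w v = PhiQ n J gphi h eta alpha w v + eps\<^sup>2 / 2 * (norm v)\<^sup>2"

end

theory Submission
  imports Defs
begin


lemma line_deriv:
  fixes f :: "'a::real_inner \<Rightarrow> real"
  assumes "\<And>y. (f has_derivative (\<lambda>u. g y \<bullet> u)) (at y)"
  shows "((\<lambda>s. f (x + s *\<^sub>R d)) has_real_derivative (g (x + s *\<^sub>R d) \<bullet> d)) (at s)"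
proof -
  have 1: "((\<lambda>s. x + s *\<^sub>R d) has_derivative (\<lambda>s'. s' *\<^sub>R d)) (at s)"
    by (auto intro!: derivative_eq_intros)
  have "((f \<circ> (\<lambda>s. x + s *\<^sub>R d)) has_derivative ((\<lambda>u. g (x + s *\<^sub>R d) \<bullet> u) \<circ> (\<lambda>s'. s' *\<^sub>R d))) (at s)"
    by (rule diff_chain_at[OF 1 assms])
  moreover have "(\<lambda>xa. xa * (g (x + s *\<^sub>R d) \<bullet> d)) = (*) (g (x + s *\<^sub>R d) \<bullet> d)"
    by (auto simp: fun_eq_iff)
  ultimately show ?thesis
    by (simp add: has_field_derivative_def o_def)
qed

lemma descent:
  fixes f :: "'a::real_inner \<Rightarrow> real"
  assumes der: "\<And>y. (f has_derivative (\<lambda>u. g y \<bullet> u)) (at y)"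
    and lip: "\<And>y. norm (g y - g x) \<le> M * norm (y - x)"
  shows "f (x + d) - f x - g x \<bullet> d \<le> M / 2 * (norm d)\<^sup>2"
proof -
  define chi where "chi s = f (x + s *\<^sub>R d) - f x - s * (g x \<bullet> d) - M / 2 * s\<^sup>2 * (norm d)\<^sup>2" for s
  have "chi 0 \<ge> chi 1"
  proof (rule DERIV_nonpos_imp_nonincreasing[where f=chi and a=0 and b=1])
    fix s :: real assume s: "0 \<le> s" "s \<le> 1"
    have D: "(chi has_real_derivative (g (x + s *\<^sub>R d) \<bullet> d - g x \<bullet> d - M * s * (norm d)\<^sup>2)) (at s)"
      unfolding chi_def
      by (rule derivative_eq_intros line_deriv[OF der] | simp)+
    have "g (x + s *\<^sub>R d) \<bullet> d - g x \<bullet> d = (g (x + s *\<^sub>R d) - g x) \<bullet> d"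
      by (simp add: inner_diff_left)
    also have "\<dots> \<le> norm (g (x + s *\<^sub>R d) - g x) * norm d"
      by (rule norm_cauchy_schwarz)
    also have "\<dots> \<le> M * norm (s *\<^sub>R d) * norm d"
    proof -
      have "norm (g (x + s *\<^sub>R d) - g x) \<le> M * norm (s *\<^sub>R d)" using lip[of "x + s *\<^sub>R d"] by simp
      then show ?thesis by (rule mult_right_mono) simp
    qed
    also have "\<dots> = M * s * (norm d)\<^sup>2" using s by (simp add: power2_eq_square)
    finally have "g (x + s *\<^sub>R d) \<bullet> d - g x \<bullet> d \<le> M * s * (norm d)\<^sup>2" .
    then have "g (x + s *\<^sub>R d) \<bullet> d - g x \<bullet> d - M * s * (norm d)\<^sup>2 \<le> 0" by simp
    with D show "\<exists>y. (chi has_real_derivative y) (at s) \<and> y \<le> 0" by blast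
  qed simp
  then show ?thesis by (simp add: chi_def)
qed

lemma convex_grad:
  fixes f :: "'a::real_inner \<Rightarrow> real"
  assumes cv: "convex_on UNIV f"
    and der: "\<And>y. (f has_derivative (\<lambda>u. g y \<bullet> u)) (at y)"
  shows "f y - f x \<ge> g x \<bullet> (y - x)"
proof -
  define psi where "psi s = f (x + s *\<^sub>R (y - x))" for s
  have cvp: "convex_on UNIV psi"
  proof (rule convex_onI)
    fix t :: real and a b :: real assume t: "0 < t" "t < 1"
    have e: "x + ((1 - t) *\<^sub>R a + t *\<^sub>R b) *\<^sub>R (y - x) = (1 - t) *\<^sub>R (x + a *\<^sub>R (y - x)) + t *\<^sub>R (x + b *\<^sub>R (y - x))"
      by (simp add: algebra_simps)
    show "psi ((1 - t) *\<^sub>R a + t *\<^sub>R b) \<le> (1 - t) * psi a + t * psi b"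
      unfolding psi_def e using convex_onD[OF cv, of t "x + a *\<^sub>R (y - x)" "x + b *\<^sub>R (y - x)"] t by simp
  qed simp
  have "(psi has_real_derivative (g x \<bullet> (y - x))) (at 0 within UNIV)"
    unfolding psi_def using line_deriv[OF der, of x "y - x" 0] by simp
  from convex_on_imp_above_tangent[OF cvp _ _ _ this, of 1]
  show ?thesis by (simp add: psi_def)
qed

lemma row_lip:
  fixes J :: "real^'d \<Rightarrow> real^'d^'c" and Hs :: "'c \<Rightarrow> real^'d \<Rightarrow> real^'d^'d"
  assumes "\<And>j x. ((\<lambda>y. J y $ j) has_derivative (\<lambda>u. Hs j x *v u)) (at x)"
    and "\<And>j x. onorm (\<lambda>u. Hs j x *v u) \<le> G"
  shows "norm (J y $ j - J x $ j) \<le> G * norm (y - x)"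
  by (rule differentiable_bound[of UNIV "\<lambda>y. J y $ j" "\<lambda>x u. Hs j x *v u" G]) (use assms in auto)

lemma comp_deriv:
  fixes h :: "real^'d \<Rightarrow> real^'c" and J :: "real^'d \<Rightarrow> real^'d^'c"
  assumes "(h has_derivative (\<lambda>u. J y *v u)) (at y)"
  shows "((\<lambda>y. h y $ j) has_derivative (\<lambda>u. (J y $ j) \<bullet> u)) (at y)"
proof -
  have "((\<lambda>y. h y $ j) has_derivative (\<lambda>u. (J y *v u) $ j)) (at y)"
    using bounded_linear.has_derivative[OF bounded_linear_vec_nth assms] .
  moreover have "(\<lambda>u. (J y *v u) $ j) = (\<lambda>u. (J y $ j) \<bullet> u)"
    by (auto simp: fun_eq_iff matrix_vector_mult_def inner_vec_def)
  ultimately show ?thesis by simp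
qed

lemma norm_sq_vec: "(norm (z :: real^'n))\<^sup>2 = (\<Sum>j\<in>UNIV. (z $ j)\<^sup>2)"
  unfolding power2_norm_eq_inner inner_vec_def by (simp add: power2_eq_square)

lemma h_taylor:
  fixes h :: "real^'d \<Rightarrow> real^'c" and J :: "real^'d \<Rightarrow> real^'d^'c" and Hs :: "'c \<Rightarrow> real^'d \<Rightarrow> real^'d^'d"
  assumes hd: "\<And>x. (h has_derivative (\<lambda>u. J x *v u)) (at x)"
    and hh: "\<And>j x. ((\<lambda>y. J y $ j) has_derivative (\<lambda>u. Hs j x *v u)) (at x)"
    and hb: "\<And>j x. onorm (\<lambda>u. Hs j x *v u) \<le> G"
  shows "(norm (h (x + d) - h x - J x *v d))\<^sup>2 \<le> real CARD('c) * (G / 2 * (norm d)\<^sup>2)\<^sup>2"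
proof -
  have comp: "\<bar>(h (x + d) - h x - J x *v d) $ j\<bar> \<le> G / 2 * (norm d)\<^sup>2" for j
  proof -
    have e: "(J x *v d) $ j = (J x $ j) \<bullet> d" by (simp add: matrix_vector_mult_def inner_vec_def)
    have lip: "\<And>y. norm (J y $ j - J x $ j) \<le> G * norm (y - x)" by (rule row_lip[OF hh hb])
    have cd: "\<And>y. ((\<lambda>y. h y $ j) has_derivative (\<lambda>u. J y $ j \<bullet> u)) (at y)" by (rule comp_deriv[OF hd])
    have 1: "h (x + d) $ j - h x $ j - (J x $ j) \<bullet> d \<le> G / 2 * (norm d)\<^sup>2"
      by (rule descent[OF cd lip])
    have 2: "(- h (x + d) $ j) - (- h x $ j) - (- (J x $ j)) \<bullet> d \<le> G / 2 * (norm d)\<^sup>2"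
    proof (rule descent[of "\<lambda>y. - h y $ j" "\<lambda>y. - (J y $ j)"])
      fix y
      show "((\<lambda>y. - h y $ j) has_derivative (\<lambda>u. - (J y $ j) \<bullet> u)) (at y)"
        using has_derivative_minus[OF comp_deriv[of h J y j, OF hd[of y]]] by simp
      show "norm (- J y $ j - - J x $ j) \<le> G * norm (y - x)"
      proof -
        have "- J y $ j - - J x $ j = -(J y $ j - J x $ j)" by simp
        then show ?thesis using lip[of y] by (simp only: norm_minus_cancel)
      qed
    qed
    have e2: "(h (x + d) - h x - J x *v d) $ j = h (x + d) $ j - h x $ j - (J x $ j) \<bullet> d" using e by simp
    have e3: "(- h (x + d) $ j) - (- h x $ j) - (- (J x $ j)) \<bullet> d = - (h (x + d) $ j - h x $ j - (J x $ j) \<bullet> d)"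
      by (simp add: inner_minus_left)
    show ?thesis unfolding e2 abs_le_iff using 1 2 e3 by linarith
  qed
  have "(norm (h (x + d) - h x - J x *v d))\<^sup>2 = (\<Sum>j\<in>UNIV. ((h (x + d) - h x - J x *v d) $ j)\<^sup>2)"
    by (rule norm_sq_vec)
  also have "\<dots> \<le> (\<Sum>j\<in>(UNIV::'c set). (G / 2 * (norm d)\<^sup>2)\<^sup>2)"
  proof (rule sum_mono)
    fix j
    show "((h (x + d) - h x - J x *v d) $ j)\<^sup>2 \<le> (G / 2 * (norm d)\<^sup>2)\<^sup>2"
      using comp[of j] by (metis abs_ge_zero power2_abs power_mono)
  qed
  also have "\<dots> = real CARD('c) * (G / 2 * (norm d)\<^sup>2)\<^sup>2" by simp
  finally show ?thesis .
qed

lemma grad_bound: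
  fixes f :: "'a::real_inner \<Rightarrow> real"
  assumes der: "\<And>y. (f has_derivative (\<lambda>u. g y \<bullet> u)) (at y)"
    and lip: "\<And>y. norm (g y - g x) \<le> L * norm (y - x)"
    and L: "L > 0" and mn: "\<And>z. f m \<le> f z"
  shows "(norm (g x))\<^sup>2 \<le> 2 * L * (f x - f m)"
proof -
  define y' where "y' = x + (- (1/L) *\<^sub>R g x)"
  define q where "q = (norm (g x))\<^sup>2"
  have A: "f y' - f x - g x \<bullet> (- (1/L) *\<^sub>R g x) \<le> L / 2 * (norm (- (1/L) *\<^sub>R g x))\<^sup>2"
    unfolding y'_def by (rule descent[OF der lip])
  have B: "g x \<bullet> (- (1/L) *\<^sub>R g x) = - q / L"
    by (simp add: power2_norm_eq_inner q_def)
  have C: "L / 2 * (norm (- (1/L) *\<^sub>R g x))\<^sup>2 = q / L / 2"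
    using L by (simp add: power_divide power2_eq_square q_def field_simps)
  have D: "f m \<le> f y'" by (rule mn)
  have "q / L - q / L / 2 \<le> f x - f m" using A B C D by linarith
  then have "q / L / 2 \<le> f x - f m" by simp
  then show ?thesis using L by (simp add: field_simps q_def)
qed

lemma young_sq:
  fixes a b :: "'a::real_inner"
  assumes e: "e > 0"
  shows "(norm (a + b))\<^sup>2 \<le> (1 + e) * (norm a)\<^sup>2 + (1 + 1/e) * (norm b)\<^sup>2"
proof -
  have "2 * (a \<bullet> b) \<le> 2 * (norm a * norm b)" using norm_cauchy_schwarz[of a b] by simp
  also have "\<dots> \<le> e * (norm a)\<^sup>2 + (norm b)\<^sup>2 / e"
  proof -
    have "0 \<le> (e * norm a - norm b)\<^sup>2 / e" using e by simp
    also have "\<dots> = e * (norm a)\<^sup>2 - 2 * (norm a * norm b) + (norm b)\<^sup>2 / e"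
      using e by (simp add: power2_eq_square field_simps)
    finally show ?thesis by simp
  qed
  finally have "2 * (a \<bullet> b) \<le> e * (norm a)\<^sup>2 + (norm b)\<^sup>2 / e" .
  moreover have "(norm (a + b))\<^sup>2 = (norm a)\<^sup>2 + 2 * (a \<bullet> b) + (norm b)\<^sup>2"
    by (simp add: power2_norm_eq_inner inner_add_left inner_add_right inner_commute)
  ultimately show ?thesis by (simp add: algebra_simps)
qed

lemma three_sq:
  fixes a b c :: "'a::real_normed_vector"
  shows "(norm (a + b + c))\<^sup>2 \<le> 3 * ((norm a)\<^sup>2 + (norm b)\<^sup>2 + (norm c)\<^sup>2)"
proof -
  have "norm (a + b + c) \<le> norm a + norm b + norm c" by (meson norm_triangle_le order_refl add_mono)
  then have "(norm (a + b + c))\<^sup>2 \<le> (norm a + norm b + norm c)\<^sup>2" by (simp add: power_mono)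
  also have "\<dots> \<le> 3 * ((norm a)\<^sup>2 + (norm b)\<^sup>2 + (norm c)\<^sup>2)"
  proof -
    have "0 \<le> (norm a - norm b)\<^sup>2 + (norm b - norm c)\<^sup>2 + (norm a - norm c)\<^sup>2" by simp
    then show ?thesis by (simp add: power2_eq_square algebra_simps)
  qed
  finally show ?thesis .
qed

lemma step_i:
  fixes z z' u g d :: "'a::real_inner"
  assumes zz: "z' = z - a *\<^sub>R g + d"
    and conv: "g \<bullet> (u - z) \<le> pu - pz"
    and gb: "(norm g)\<^sup>2 \<le> 2 * L * (pz - pu)"
    and a: "a > 0" and aL: "a * L \<le> al" and e: "e > 0" and mn: "pu \<le> pz"
  shows "(norm (z' - u))\<^sup>2 \<le> (1 + e) * ((norm (z - u))\<^sup>2 - 2 * a * (1 - al) * (pz - pu)) + (1 + 1/e) * (norm d)\<^sup>2"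
proof -
  have eq: "z' - u = (z - a *\<^sub>R g - u) + d" using zz by (simp add: algebra_simps)
  have 1: "(norm (z' - u))\<^sup>2 \<le> (1 + e) * (norm (z - a *\<^sub>R g - u))\<^sup>2 + (1 + 1/e) * (norm d)\<^sup>2"
    unfolding eq by (rule young_sq[OF e])
  have "(norm (z - a *\<^sub>R g - u))\<^sup>2 = (norm ((z - u) - a *\<^sub>R g))\<^sup>2" by (simp add: algebra_simps)
  also have "\<dots> = (norm (z - u))\<^sup>2 - 2 * a * (g \<bullet> (z - u)) + a\<^sup>2 * (norm g)\<^sup>2"
  proof -
    have "(norm ((z - u) - a *\<^sub>R g))\<^sup>2 = ((z - u) - a *\<^sub>R g) \<bullet> ((z - u) - a *\<^sub>R g)"
      by (rule power2_norm_eq_inner)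
    also have "\<dots> = (z - u) \<bullet> (z - u) - 2 * a * (g \<bullet> (z - u)) + a\<^sup>2 * (g \<bullet> g)"
      by (simp add: inner_diff_left inner_diff_right inner_commute power2_eq_square algebra_simps)
    finally show ?thesis by (simp add: power2_norm_eq_inner)
  qed
  also have "\<dots> \<le> (norm (z - u))\<^sup>2 - 2 * a * (pz - pu) + a\<^sup>2 * (2 * L * (pz - pu))"
  proof -
    have "g \<bullet> (z - u) = - (g \<bullet> (u - z))" by (simp add: inner_diff_right)
    then have "pz - pu \<le> g \<bullet> (z - u)" using conv by simp
    then have A: "2 * a * (pz - pu) \<le> 2 * a * (g \<bullet> (z - u))" using a by simp
    have B: "a\<^sup>2 * (norm g)\<^sup>2 \<le> a\<^sup>2 * (2 * L * (pz - pu))" using gb by (simp add: mult_left_mono)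
    show ?thesis using A B by linarith
  qed
  also have "\<dots> \<le> (norm (z - u))\<^sup>2 - 2 * a * (1 - al) * (pz - pu)"
  proof -
    have "a\<^sup>2 * (2 * L * (pz - pu)) = 2 * a * (a * L) * (pz - pu)" by (simp add: power2_eq_square)
    also have "\<dots> \<le> 2 * a * al * (pz - pu)" using a aL mn by (simp add: mult_left_mono mult_right_mono)
    finally show ?thesis by (simp add: algebra_simps)
  qed
  finally show ?thesis using 1 e
    by (smt (verit) mult_left_mono)
qed


theorem theorem2:
  fixes n :: nat
    and h :: "nat \<Rightarrow> real^'d \<Rightarrow> real^'c"
    and J :: "nat \<Rightarrow> real^'d \<Rightarrow> real^'d^'c"
    and Hs :: "nat \<Rightarrow> 'c \<Rightarrow> real^'d \<Rightarrow> real^'d^'d"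
    and phi :: "nat \<Rightarrow> real^'c \<Rightarrow> real"
    and gphi :: "nat \<Rightarrow> real^'c \<Rightarrow> real^'c"
    and hstar :: "nat \<Rightarrow> real^'c"
    and L G V H eps beta D alpha :: real
    and T :: nat
    and w v vreg :: "nat \<Rightarrow> real^'d"
  assumes n_pos: "n \<ge> 1"
    \<comment> \<open>Assumption A: convex, bounded below, L-smooth (gradient gphi, L-Lipschitz)\<close>
    and L_pos: "L > 0"
    and phi_convex: "\<And>i. i \<in> {1..n} \<Longrightarrow> convex_on UNIV (phi i)"
    and phi_bdd: "\<And>i. i \<in> {1..n} \<Longrightarrow> bdd_below (range (phi i))"
    and phi_grad: "\<And>i z. i \<in> {1..n} \<Longrightarrow> (phi i has_derivative (\<lambda>u. gphi i z \<bullet> u)) (at z)"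
    and phi_smooth: "\<And>i z1 z2. i \<in> {1..n} \<Longrightarrow> norm (gphi i z1 - gphi i z2) \<le> L * norm (z1 - z2)"
    \<comment> \<open>each phi_i attains its minimum at hstar i\<close>
    and hstar_min: "\<And>i z. i \<in> {1..n} \<Longrightarrow> phi i (hstar i) \<le> phi i z"
    \<comment> \<open>Assumption B: h(.;i) is C^2 with Jacobian J and component Hessians Hs bounded by G\<close>
    and G_pos: "G > 0"
    and h_jac: "\<And>i x. i \<in> {1..n} \<Longrightarrow> (h i has_derivative (\<lambda>u. J i x *v u)) (at x)"
    and h_hess: "\<And>i j x. i \<in> {1..n} \<Longrightarrow> ((\<lambda>y. J i y $ j) has_derivative (\<lambda>u. Hs i j x *v u)) (at x)"
    and h_hess_cont: "\<And>i j. i \<in> {1..n} \<Longrightarrow> continuous_on UNIV (Hs i j)"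
    and h_hess_bd: "\<And>i j x. i \<in> {1..n} \<Longrightarrow> onorm (\<lambda>u. Hs i j x *v u) \<le> G"
    \<comment> \<open>parameters\<close>
    and eps_pos: "eps > 0"
    and beta_pos: "beta > 0"
    and T_def: "real T = beta / eps"
    and D_pos: "D > 0"
    and alpha_pos: "0 < alpha" and alpha_lt: "alpha < 1/4"
    \<comment> \<open>Algorithm 2 with eta^(t) = D sqrt eps, alpha_i^(t) = (1+eps)^t alpha / (e^beta L)\<close>
    and vreg_min: "\<And>t u. t < T \<Longrightarrow>
        PsiQ n J gphi h (D * sqrt eps) (\<lambda>i. (1 + eps) ^ t * (alpha / (exp beta * L))) eps (w t) (vreg t)
        \<le> PsiQ n J gphi h (D * sqrt eps) (\<lambda>i. (1 + eps) ^ t * (alpha / (exp beta * L))) eps (w t) u"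
    and v_close: "\<And>t. t < T \<Longrightarrow> norm (v t - vreg t) \<le> eps"
    and w_step: "\<And>t. t < T \<Longrightarrow> w (Suc t) = w t - (D * sqrt eps) *\<^sub>R v t"
    \<comment> \<open>Assumption C\<close>
    and V_pos: "V > 0"
    and assmC: "\<And>t. t < T \<Longrightarrow> \<exists>vh. (norm vh)\<^sup>2 \<le> V \<and>
        PhiQ n J gphi h (D * sqrt eps) (\<lambda>i. (1 + eps) ^ t * (alpha / (exp beta * L))) (w t) vh \<le> eps\<^sup>2"
    \<comment> \<open>Assumption D\<close>
    and H_pos: "H > 0"
    and assmD: "\<And>i t. i \<in> {1..n} \<Longrightarrow> t < T \<Longrightarrow> onorm (\<lambda>u. J i (w t) *v u) \<le> H / sqrt eps"
  shows "(\<Sum>t<T. Fobj n phi h (w t) - (INF x. Fobj n phi h x)) / real T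
    \<le> exp beta * L * (1 + eps) / (2 * (1 - 4 * alpha) * alpha * beta)
        * ((\<Sum>i=1..n. (norm (h i (w 0) - hstar i))\<^sup>2) / real n) * eps
      + exp beta * L * (4 * eps + 3) / (2 * alpha * (1 - 4 * alpha))
        * (D\<^sup>2 * H\<^sup>2 + real CARD('c) * (2 + (V + eps\<^sup>2 + 2) * G * D\<^sup>2)\<^sup>2 + 2 + V) * eps"
proof -
  define eta where "eta = D * sqrt eps"
  define a0 where "a0 = alpha / (exp beta * L)"
  define Fs where "Fs = (INF x. Fobj n phi h x)"
  define X where "X = (V + eps\<^sup>2 + 2) * G * D\<^sup>2"
  define K where "K = D\<^sup>2 * H\<^sup>2 + real CARD('c) * (2 + X)\<^sup>2 + 2 + V"
  define Y where "Y t = (\<Sum>i=1..n. (norm (h i (w t) - hstar i))\<^sup>2) / real n / (1 + eps) ^ t" for t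
  have npos: "real n > 0" using n_pos by simp
  have a0pos: "a0 > 0" unfolding a0_def using alpha_pos L_pos by simp
  have Xnn: "X \<ge> 0" unfolding X_def using V_pos G_pos by simp
  have Knn: "K \<ge> 0" unfolding K_def using V_pos by simp
  have Fs_ge: "(\<Sum>i=1..n. phi i (hstar i)) / real n \<le> Fs"
    unfolding Fs_def Fobj_def
    by (rule cINF_greatest) (auto intro!: divide_right_mono sum_mono hstar_min)
  have pow_le: "(1 + eps) ^ t \<le> exp beta" if "t \<le> T" for t
  proof -
    have "(1 + eps) ^ t \<le> (exp eps) ^ t"
      by (rule power_mono) (use eps_pos in auto)
    also have "\<dots> = exp (real t * eps)" by (simp add: exp_of_nat_mult)
    also have "\<dots> \<le> exp (real T * eps)" using that eps_pos by (simp add: mult_right_mono)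
    also have "real T * eps = beta" using T_def eps_pos by simp
    finally show ?thesis by simp
  qed
  have key: "Y (Suc t) \<le> Y t - 2 * a0 * (1 - alpha) * (Fobj n phi h (w t) - Fs) + 3 * eps * K"
    if tT: "t < T" for t
  proof -
    define aa where "aa = (1 + eps) ^ t * a0"
    define E where "E i = eta *\<^sub>R (J i (w t) *v vreg t) - aa *\<^sub>R gphi i (h i (w t))" for i
    define r where "r i = h i (w (Suc t)) - h i (w t) - J i (w t) *v (- (eta *\<^sub>R v t))" for i
    define dd where "dd i = r i - E i - eta *\<^sub>R (J i (w t) *v (v t - vreg t))" for i
    have alpha_eq: "(\<lambda>i. (1 + eps) ^ t * (alpha / (exp beta * L))) = (\<lambda>i. aa)"
      unfolding aa_def a0_def by simp
    have atpos: "aa > 0" unfolding aa_def using a0pos eps_pos by simp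
    have pt: "(1 + eps) ^ t \<ge> 1" using eps_pos by simp
    have atL: "aa * L \<le> alpha"
    proof -
      have "aa * L = (1 + eps) ^ t * alpha / exp beta" unfolding aa_def a0_def using L_pos by simp
      also have "\<dots> \<le> exp beta * alpha / exp beta"
        using pow_le[of t] tT alpha_pos by (intro divide_right_mono mult_right_mono) auto
      also have "\<dots> = alpha" by simp
      finally show ?thesis .
    qed
    obtain vh where vh: "(norm vh)\<^sup>2 \<le> V"
      "PhiQ n J gphi h (D * sqrt eps) (\<lambda>i. (1 + eps) ^ t * (alpha / (exp beta * L))) (w t) vh \<le> eps\<^sup>2"
      using assmC[OF tT] by blast
    have Phi_nn: "PhiQ n J gphi h et al ww u \<ge> 0" for et al ww u
      unfolding PhiQ_def using npos by (intro divide_nonneg_pos sum_nonneg) auto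
    define Pr where "Pr = PhiQ n J gphi h (D * sqrt eps) (\<lambda>i. (1 + eps) ^ t * (alpha / (exp beta * L))) (w t) (vreg t)"
    have psi: "Pr + eps\<^sup>2 / 2 * (norm (vreg t))\<^sup>2 \<le> eps\<^sup>2 + eps\<^sup>2 / 2 * V"
    proof -
      have "Pr + eps\<^sup>2 / 2 * (norm (vreg t))\<^sup>2 \<le>
          PhiQ n J gphi h (D * sqrt eps) (\<lambda>i. (1 + eps) ^ t * (alpha / (exp beta * L))) (w t) vh + eps\<^sup>2 / 2 * (norm vh)\<^sup>2"
        using vreg_min[OF tT, of vh] unfolding PsiQ_def Pr_def .
      moreover have "eps\<^sup>2 / 2 * (norm vh)\<^sup>2 \<le> eps\<^sup>2 / 2 * V" using vh(1) by (intro mult_left_mono) auto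
      ultimately show ?thesis using vh(2) by linarith
    qed
    have Prnn: "Pr \<ge> 0" unfolding Pr_def by (rule Phi_nn)
    have e2pos: "eps\<^sup>2 / 2 > 0" using eps_pos by simp
    have vreg_b: "(norm (vreg t))\<^sup>2 \<le> 2 + V"
    proof -
      have "eps\<^sup>2 / 2 * (norm (vreg t))\<^sup>2 \<le> eps\<^sup>2 / 2 * (2 + V)" using psi Prnn by (simp add: algebra_simps)
      then show ?thesis using e2pos by (simp only: mult_le_cancel_left_pos)
    qed
    have Pr_eq: "Pr = (\<Sum>i=1..n. (norm (E i))\<^sup>2) / (2 * real n)"
      unfolding Pr_def PhiQ_def alpha_eq E_def eta_def by simp
    have PhiE: "(\<Sum>i=1..n. (norm (E i))\<^sup>2) / real n \<le> eps\<^sup>2 * (2 + V)"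
    proof -
      have "Pr \<le> eps\<^sup>2 + eps\<^sup>2 / 2 * V" using psi by (smt (verit) e2pos zero_le_power2 mult_nonneg_nonneg)
      then show ?thesis unfolding Pr_eq using npos by (simp add: field_simps)
    qed
    have v_b: "(norm (v t))\<^sup>2 \<le> 2 * (2 + V + eps\<^sup>2)"
    proof -
      have "norm (v t) \<le> norm (vreg t) + norm (v t - vreg t)" by (metis norm_triangle_sub add.commute)
      also have "\<dots> \<le> norm (vreg t) + eps" using v_close[OF tT] by simp
      finally have "(norm (v t))\<^sup>2 \<le> (norm (vreg t) + eps)\<^sup>2" by (simp add: power_mono)
      also have "\<dots> \<le> 2 * (norm (vreg t))\<^sup>2 + 2 * eps\<^sup>2"
      proof -
        have "0 \<le> (norm (vreg t) - eps)\<^sup>2" by simp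
        then show ?thesis by (simp add: power2_eq_square algebra_simps)
      qed
      finally show ?thesis using vreg_b by simp
    qed
    have eta2: "eta\<^sup>2 = D\<^sup>2 * eps" unfolding eta_def using eps_pos by (simp add: power_mult_distrib)
    have etann: "eta \<ge> 0" unfolding eta_def using D_pos eps_pos by simp
    have r_b: "(norm (r i))\<^sup>2 \<le> real CARD('c) * (eps * X)\<^sup>2" if i: "i \<in> {1..n}" for i
    proof -
      have ws: "w (Suc t) = w t + (- (eta *\<^sub>R v t))" using w_step[OF tT] unfolding eta_def by simp
      have "(norm (r i))\<^sup>2 \<le> real CARD('c) * (G / 2 * (norm (- (eta *\<^sub>R v t)))\<^sup>2)\<^sup>2"
        unfolding r_def ws
        by (rule h_taylor[where h="h i" and J="J i" and Hs="Hs i", OF h_jac[OF i] h_hess[OF i] h_hess_bd[OF i]])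
      also have "\<dots> \<le> real CARD('c) * (eps * X)\<^sup>2"
      proof (rule mult_left_mono[OF power_mono])
        have "G / 2 * (norm (- (eta *\<^sub>R v t)))\<^sup>2 = G / 2 * D\<^sup>2 * eps * (norm (v t))\<^sup>2"
          using etann eta2 by (simp add: power_mult_distrib)
        also have "\<dots> \<le> G / 2 * D\<^sup>2 * eps * (2 * (2 + V + eps\<^sup>2))"
          using v_b G_pos eps_pos by (intro mult_left_mono) auto
        also have "\<dots> = eps * X" unfolding X_def by (simp add: algebra_simps)
        finally show "G / 2 * (norm (- (eta *\<^sub>R v t)))\<^sup>2 \<le> eps * X" .
        show "0 \<le> G / 2 * (norm (- (eta *\<^sub>R v t)))\<^sup>2" using G_pos by simp
      qed simp
      finally show ?thesis .
    qed
    have J_b: "norm (eta *\<^sub>R (J i (w t) *v (v t - vreg t))) \<le> D * H * eps" if i: "i \<in> {1..n}" for i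
    proof -
      have "norm (eta *\<^sub>R (J i (w t) *v (v t - vreg t))) = eta * norm (J i (w t) *v (v t - vreg t))"
        using etann by simp
      also have "\<dots> \<le> eta * (onorm (\<lambda>u. J i (w t) *v u) * norm (v t - vreg t))"
        using onorm[OF matrix_vector_mul_bounded_linear, of "J i (w t)" "v t - vreg t"] etann
        by (intro mult_left_mono) auto
      also have "\<dots> \<le> eta * (H / sqrt eps * eps)"
        using assmD[OF i tT] v_close[OF tT] etann onorm_pos_le[OF matrix_vector_mul_bounded_linear, of "J i (w t)"]
        by (intro mult_left_mono mult_mono) auto
      also have "\<dots> = D * H * eps" unfolding eta_def using eps_pos by simp
      finally show ?thesis .
    qed
    have d_b: "(norm (dd i))\<^sup>2 \<le> 3 * (real CARD('c) * (eps * X)\<^sup>2 + (norm (E i))\<^sup>2 + (D * H * eps)\<^sup>2)"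
      if i: "i \<in> {1..n}" for i
    proof -
      have "dd i = r i + (- E i) + (- (eta *\<^sub>R (J i (w t) *v (v t - vreg t))))" unfolding dd_def by simp
      then have "(norm (dd i))\<^sup>2 \<le> 3 * ((norm (r i))\<^sup>2 + (norm (- E i))\<^sup>2 + (norm (- (eta *\<^sub>R (J i (w t) *v (v t - vreg t)))))\<^sup>2)"
        using three_sq by metis
      moreover have "(norm (- (eta *\<^sub>R (J i (w t) *v (v t - vreg t)))))\<^sup>2 \<le> (D * H * eps)\<^sup>2"
        using J_b[OF i] by (simp only: norm_minus_cancel) (rule power_mono, auto)
      ultimately show ?thesis using r_b[OF i] by simp
    qed
    have sum_d: "(\<Sum>i=1..n. (norm (dd i))\<^sup>2) / real n / eps \<le> 3 * eps * K"
    proof -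
      have "(\<Sum>i=1..n. (norm (dd i))\<^sup>2) \<le> (\<Sum>i=1..n. 3 * (real CARD('c) * (eps * X)\<^sup>2 + (D * H * eps)\<^sup>2) + 3 * (norm (E i))\<^sup>2)"
        by (rule sum_mono) (use d_b in \<open>auto simp: algebra_simps\<close>)
      also have "\<dots> = real n * (3 * (real CARD('c) * (eps * X)\<^sup>2 + (D * H * eps)\<^sup>2)) + 3 * (\<Sum>i=1..n. (norm (E i))\<^sup>2)"
        by (simp add: sum.distrib sum_distrib_left)
      finally have "(\<Sum>i=1..n. (norm (dd i))\<^sup>2) / real n \<le> 3 * (real CARD('c) * (eps * X)\<^sup>2 + (D * H * eps)\<^sup>2) + 3 * ((\<Sum>i=1..n. (norm (E i))\<^sup>2) / real n)"
        using npos by (simp add: field_simps)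
      also have "\<dots> \<le> 3 * (real CARD('c) * (eps * X)\<^sup>2 + (D * H * eps)\<^sup>2) + 3 * (eps\<^sup>2 * (2 + V))"
        using PhiE by simp
      also have "\<dots> \<le> 3 * eps\<^sup>2 * K"
      proof -
        have "X\<^sup>2 \<le> (2 + X)\<^sup>2" using Xnn by (intro power_mono) auto
        then have "real CARD('c) * X\<^sup>2 \<le> real CARD('c) * (2 + X)\<^sup>2" by (intro mult_left_mono) auto
        then have "eps\<^sup>2 * (real CARD('c) * X\<^sup>2) \<le> eps\<^sup>2 * (real CARD('c) * (2 + X)\<^sup>2)" by (intro mult_left_mono) auto
        then show ?thesis unfolding K_def by (simp add: power_mult_distrib algebra_simps)
      qed
      finally have A: "(\<Sum>i=1..n. (norm (dd i))\<^sup>2) / real n \<le> 3 * eps\<^sup>2 * K" .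
      then have "(\<Sum>i=1..n. (norm (dd i))\<^sup>2) / real n / eps \<le> 3 * eps\<^sup>2 * K / eps"
        using eps_pos by (intro divide_right_mono) auto
      also have "3 * eps\<^sup>2 * K / eps = 3 * eps * K" using eps_pos by (simp add: power2_eq_square)
      finally show ?thesis .
    qed
    have step: "(norm (h i (w (Suc t)) - hstar i))\<^sup>2 / (1 + eps) ^ Suc t \<le>
        (norm (h i (w t) - hstar i))\<^sup>2 / (1 + eps) ^ t - 2 * a0 * (1 - alpha) * (phi i (h i (w t)) - phi i (hstar i))
        + (norm (dd i))\<^sup>2 / eps" if i: "i \<in> {1..n}" for i
    proof -
      define z where "z = h i (w t)"
      define u where "u = hstar i"
      define g where "g = gphi i z"
      have zz: "h i (w (Suc t)) = z - aa *\<^sub>R g + dd i"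
      proof -
        have m1: "J i (w t) *v (- (eta *\<^sub>R v t)) = - (eta *\<^sub>R (J i (w t) *v v t))"
          using matrix_vector_mult_scaleR[of "J i (w t)" "- eta" "v t"] by simp
        show ?thesis unfolding dd_def r_def E_def z_def g_def m1 by (simp add: algebra_simps)
      qed
      have conv: "g \<bullet> (u - z) \<le> phi i u - phi i z"
        unfolding g_def by (rule convex_grad[OF phi_convex[OF i] phi_grad[OF i]])
      have gb: "(norm g)\<^sup>2 \<le> 2 * L * (phi i z - phi i u)"
        unfolding g_def u_def by (rule grad_bound[OF phi_grad[OF i] phi_smooth[OF i] L_pos hstar_min[OF i]])
      have mn: "phi i u \<le> phi i z" unfolding u_def by (rule hstar_min[OF i])
      have S: "(norm (h i (w (Suc t)) - u))\<^sup>2 \<le> (1 + eps) * ((norm (z - u))\<^sup>2 - 2 * aa * (1 - alpha) * (phi i z - phi i u)) + (1 + 1/eps) * (norm (dd i))\<^sup>2"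
        by (rule step_i[OF zz conv gb atpos atL eps_pos mn])
      define p where "p = (1 + eps) ^ t"
      have ppos: "p > 0" unfolding p_def using eps_pos by simp
      have p1: "p \<ge> 1" unfolding p_def using pt .
      have "(norm (h i (w (Suc t)) - u))\<^sup>2 / (1 + eps) ^ Suc t = (norm (h i (w (Suc t)) - u))\<^sup>2 / (1 + eps) / p"
        unfolding p_def by (simp add: field_simps)
      also have "\<dots> \<le> ((1 + eps) * ((norm (z - u))\<^sup>2 - 2 * aa * (1 - alpha) * (phi i z - phi i u)) + (1 + 1/eps) * (norm (dd i))\<^sup>2) / (1 + eps) / p"
        using S ppos eps_pos by (intro divide_right_mono) auto
      also have "\<dots> = (norm (z - u))\<^sup>2 / p - 2 * (aa / p) * (1 - alpha) * (phi i z - phi i u) + (norm (dd i))\<^sup>2 / eps / p"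
      proof -
        have g1: "((1 + e) * Z + (1 + 1/e) * Q) / (1 + e) / p = Z / p + Q / e / p" if "e > 0" "p > 0" for e p Z Q :: real
        proof -
          have ne: "1 + e \<noteq> 0" using that by simp
          have "(1 + 1/e) * Q = (1 + e) * (Q / e)" using that by (simp add: field_simps)
          then have "(1 + e) * Z + (1 + 1/e) * Q = (1 + e) * (Z + Q / e)" by (simp add: algebra_simps)
          then have "((1 + e) * Z + (1 + 1/e) * Q) / (1 + e) = Z + Q / e" using ne by simp
          then show ?thesis by (simp add: add_divide_distrib)
        qed
        have g2: "(A - 2 * a * c * B) / p = A / p - 2 * (a / p) * c * B" for A a c B :: real
          by (simp add: diff_divide_distrib)
        show ?thesis unfolding g1[OF eps_pos ppos] g2 ..
      qed
      also have "aa / p = a0" unfolding aa_def p_def using eps_pos by simp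
      also have "(norm (dd i))\<^sup>2 / eps / p \<le> (norm (dd i))\<^sup>2 / eps"
      proof -
        have "(norm (dd i))\<^sup>2 / eps / p \<le> (norm (dd i))\<^sup>2 / eps / 1"
          using p1 eps_pos by (intro divide_left_mono) auto
        then show ?thesis by simp
      qed
      finally show ?thesis unfolding z_def u_def p_def by simp
    qed
    have "Y (Suc t) = (\<Sum>i=1..n. (norm (h i (w (Suc t)) - hstar i))\<^sup>2 / (1 + eps) ^ Suc t) / real n"
      unfolding Y_def by (simp add: sum_divide_distrib field_simps)
    also have "\<dots> \<le> (\<Sum>i=1..n. (norm (h i (w t) - hstar i))\<^sup>2 / (1 + eps) ^ t - 2 * a0 * (1 - alpha) * (phi i (h i (w t)) - phi i (hstar i))
        + (norm (dd i))\<^sup>2 / eps) / real n"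
      using npos by (intro divide_right_mono sum_mono step) auto
    also have "\<dots> = Y t - 2 * a0 * (1 - alpha) * ((\<Sum>i=1..n. phi i (h i (w t))) / real n - (\<Sum>i=1..n. phi i (hstar i)) / real n)
        + (\<Sum>i=1..n. (norm (dd i))\<^sup>2) / real n / eps"
    proof -
      define SA where "SA = (\<Sum>i=1..n. (norm (h i (w t) - hstar i))\<^sup>2)"
      define SZ where "SZ = (\<Sum>i=1..n. phi i (h i (w t)))"
      define SU where "SU = (\<Sum>i=1..n. phi i (hstar i))"
      define SQ where "SQ = (\<Sum>i=1..n. (norm (dd i))\<^sup>2)"
      define c where "c = 2 * a0 * (1 - alpha)"
      have "(\<Sum>i=1..n. (norm (h i (w t) - hstar i))\<^sup>2 / (1 + eps) ^ t - 2 * a0 * (1 - alpha) * (phi i (h i (w t)) - phi i (hstar i))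
        + (norm (dd i))\<^sup>2 / eps) = SA / (1 + eps) ^ t - c * (SZ - SU) + SQ / eps"
        unfolding SA_def SZ_def SU_def SQ_def c_def
        by (simp add: sum.distrib sum_subtractf sum_divide_distrib sum_distrib_left[symmetric])
      moreover have "(SA / (1 + eps) ^ t - c * (SZ - SU) + SQ / eps) / real n = SA / real n / (1 + eps) ^ t - c * (SZ / real n - SU / real n) + SQ / real n / eps"
        using npos by (simp add: field_simps)
      ultimately show ?thesis unfolding Y_def SA_def[symmetric] SZ_def[symmetric] SU_def[symmetric] SQ_def[symmetric] c_def[symmetric]
        by simp
    qed
    also have "\<dots> \<le> Y t - 2 * a0 * (1 - alpha) * (Fobj n phi h (w t) - Fs) + 3 * eps * K"
    proof -
      have "2 * a0 * (1 - alpha) * (Fobj n phi h (w t) - Fs) \<le> 2 * a0 * (1 - alpha) * ((\<Sum>i=1..n. phi i (h i (w t))) / real n - (\<Sum>i=1..n. phi i (hstar i)) / real n)"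
        using Fs_ge a0pos alpha_lt unfolding Fobj_def by (intro mult_left_mono) auto
      then show ?thesis using sum_d by linarith
    qed
    finally show ?thesis .
  qed
  have sumkey: "(\<Sum>t<T. 2 * a0 * (1 - alpha) * (Fobj n phi h (w t) - Fs)) \<le> (\<Sum>t<T. (Y t - Y (Suc t)) + 3 * eps * K)"
    proof (rule sum_mono)
    fix t assume "t \<in> {..<T}"
    then have "t < T" by simp
    from key[OF this] show "2 * a0 * (1 - alpha) * (Fobj n phi h (w t) - Fs) \<le> Y t - Y (Suc t) + 3 * eps * K" by linarith
  qed
  also have "\<dots> = Y 0 - Y T + real T * (3 * eps * K)"
    by (simp add: sum.distrib sum_lessThan_telescope')
  finally have sk: "2 * a0 * (1 - alpha) * (\<Sum>t<T. Fobj n phi h (w t) - Fs) \<le> Y 0 - Y T + real T * (3 * eps * K)"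
    by (simp add: sum_distrib_left)
  define P where "P = (\<Sum>i=1..n. (norm (h i (w 0) - hstar i))\<^sup>2) / real n"
  have Y0: "Y 0 = P" unfolding Y_def P_def by simp
  have YT: "Y T \<ge> 0" unfolding Y_def using npos eps_pos by (auto intro!: divide_nonneg_pos sum_nonneg)
  have Pnn: "P \<ge> 0" unfolding P_def using npos by (auto intro!: divide_nonneg_pos sum_nonneg)
  have Tpos: "real T > 0" using T_def beta_pos eps_pos by simp
  have c1pos: "2 * a0 * (1 - alpha) > 0" using a0pos alpha_lt by simp
  define S where "S = (\<Sum>t<T. Fobj n phi h (w t) - Fs)"
  have "S \<le> (P + real T * (3 * eps * K)) / (2 * a0 * (1 - alpha))"
    using sk Y0 YT c1pos unfolding S_def[symmetric] by (simp add: field_simps)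
  then have "S / real T \<le> (P + real T * (3 * eps * K)) / (2 * a0 * (1 - alpha)) / real T"
    using Tpos by (intro divide_right_mono) auto
  also have "\<dots> = P / (2 * a0 * (1 - alpha) * real T) + 3 * eps * K / (2 * a0 * (1 - alpha))"
  proof -
    have gen: "(p + tt * m) / c / tt = p / (c * tt) + m / c" if "c > 0" "tt > 0" for p tt m c :: real
      using that by (simp add: field_simps)
    show ?thesis by (rule gen[OF c1pos Tpos])
  qed
  also have "\<dots> \<le> exp beta * L * (1 + eps) / (2 * (1 - 4 * alpha) * alpha * beta) * P * eps
      + exp beta * L * (4 * eps + 3) / (2 * alpha * (1 - 4 * alpha)) * K * eps"
  proof (rule add_mono)
    define C1 where "C1 = exp beta * L * P * eps / (2 * alpha * beta)"
    have C1nn: "C1 \<ge> 0" unfolding C1_def using Pnn L_pos alpha_pos beta_pos eps_pos by simp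
    have "P / (2 * a0 * (1 - alpha) * real T) = C1 * (1 / (1 - alpha))"
    proof -
      have "1 - alpha \<noteq> 0" using alpha_lt by simp
      then show ?thesis unfolding C1_def a0_def T_def using eps_pos alpha_pos L_pos beta_pos by (simp add: field_simps)
    qed
    also have "\<dots> \<le> C1 * ((1 + eps) / (1 - 4 * alpha))"
    proof (rule mult_left_mono[OF _ C1nn])
      have h: "alpha * eps \<le> 1 * eps" using alpha_lt eps_pos by (intro mult_right_mono) auto
      have "(1 + eps) * (1 - alpha) = 1 + eps - alpha - alpha * eps" by (simp add: algebra_simps)
      then have "1 - 4 * alpha \<le> (1 + eps) * (1 - alpha)" using alpha_pos h by linarith
      then show "1 / (1 - alpha) \<le> (1 + eps) / (1 - 4 * alpha)"
        using alpha_lt by (simp add: field_simps)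
    qed
    also have "\<dots> = exp beta * L * (1 + eps) / (2 * (1 - 4 * alpha) * alpha * beta) * P * eps"
      unfolding C1_def by (simp add: field_simps)
    finally show "P / (2 * a0 * (1 - alpha) * real T) \<le> exp beta * L * (1 + eps) / (2 * (1 - 4 * alpha) * alpha * beta) * P * eps" .
    define C2 where "C2 = exp beta * L * eps * K / (2 * alpha)"
    have C2nn: "C2 \<ge> 0" unfolding C2_def using Knn L_pos alpha_pos eps_pos by simp
    have "3 * eps * K / (2 * a0 * (1 - alpha)) = C2 * (3 / (1 - alpha))"
    proof -
      have "1 - alpha \<noteq> 0" using alpha_lt by simp
      then show ?thesis unfolding C2_def a0_def using alpha_pos L_pos by (simp add: field_simps)
    qed
    also have "\<dots> \<le> C2 * ((4 * eps + 3) / (1 - 4 * alpha))"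
    proof (rule mult_left_mono[OF _ C2nn])
      have h: "alpha * eps \<le> 1 * eps" using alpha_lt eps_pos by (intro mult_right_mono) auto
      have "(4 * eps + 3) * (1 - alpha) = 4 * eps + 3 - 3 * alpha - 4 * (alpha * eps)" by (simp add: algebra_simps)
      moreover have "3 * (1 - 4 * alpha) = 3 - 12 * alpha" by simp
      ultimately have "3 * (1 - 4 * alpha) \<le> (4 * eps + 3) * (1 - alpha)" using alpha_pos h by linarith
      then show "3 / (1 - alpha) \<le> (4 * eps + 3) / (1 - 4 * alpha)"
        using alpha_lt by (simp add: field_simps)
    qed
    also have "\<dots> = exp beta * L * (4 * eps + 3) / (2 * alpha * (1 - 4 * alpha)) * K * eps"
      unfolding C2_def by (simp add: field_simps)
    finally show "3 * eps * K / (2 * a0 * (1 - alpha)) \<le> exp beta * L * (4 * eps + 3) / (2 * alpha * (1 - 4 * alpha)) * K * eps" .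
  qed
  finally show ?thesis unfolding S_def Fs_def P_def K_def X_def .
qed

end
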